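(* Let $q\in\mathbb{C}$ with $0<|q|<1$ and $l,m,n,u\in\mathbb{N}$. Then \[ \sum_{k=0}^\infty\frac{q^{k^2+uk} (q)_{l+m+n-k}} {(q)_k (q)_{l-k}(q)_{m-k}(q)_{n-k} (q)_{u+k}} =\sum_{k=-\infty}^\infty\frac{(-1)^k q^{(3k^2-k)/2} (q)_{l+m}(q)_{l+n}(q)_{m+n}(q)_{u-1}} {(q)_{l-k}(q)_{m-k}(q)_{n-k}(q)_{u-k}(q)_{l+k}(q)_{m+k}(q)_{n+k}(q)_{u+k-1}}, \] and \[ \sum_{k=0}^\infty\frac{q^{k^2+(u-1)k} (q)_{l+m+n-k}} {(q)_k (q)_{l-k}(q)_{m-k}(q)_{n-k}(q)_{u+k}} =\sum_{k=-\infty}^\infty\frac{(-1)^k q^{(3k^2+k)/2} (q)_{l+m}(q)_{m+n}(q)_{l+n}(q)_{u-1}} {(q)_{l-k}(q)_{m-k}(q)_{n-k}(q)_{u-k}(q)_{l+k}(q)_{m+k}(q)_{n+k}(q)_{u+k-1}}. \]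
   Context: For an integer $n$, $(q)_n=(q;q)_n$ with $(q)_0=1$ and $(q)_n=(1-q)(1-q^2)\cdots(1-q^n)$ for $n\ge1$; for $n<0$ one uses the convention $1/(q)_n=0$. *)

theory Defs
  imports "HOL-Analysis.Analysis"
begin

definition qpoch :: "complex \<Rightarrow> nat \<Rightarrow> complex" where
  "qpoch q n = (\<Prod>i\<in>{1..n}. 1 - q ^ i)"

definition qpoch_inv :: "complex \<Rightarrow> int \<Rightarrow> complex" where
  "qpoch_inv q n = (if n < 0 then 0 else 1 / qpoch q (nat n))"

end

theory Submission
  imports Defs
begin


lemma qpoch_0[simp]: "qpoch q 0 = 1"
  by (simp add: qpoch_def)

lemma qpoch_Suc: "qpoch q (Suc n) = qpoch q n * (1 - q ^ Suc n)"
  by (simp add: qpoch_def prod.nat_ivl_Suc')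

lemma qpoch_nz:
  assumes "norm q < 1" shows "qpoch q n \<noteq> 0"
proof (induction n)
  case 0 then show ?case by simp
next
  case (Suc n)
  have "norm q ^ Suc n < 1" using assms power_less_one_iff[of "norm q" "Suc n"] by simp
  then have "norm (q ^ Suc n) < 1" by (simp only: norm_power)
  then have "q ^ Suc n \<noteq> 1" by auto
  then show ?case using Suc by (simp add: qpoch_Suc)
qed

locale qc =
  fixes q :: complex
  assumes qnz: "q \<noteq> 0" and Pnz: "\<And>n. qpoch q n \<noteq> 0"
begin

abbreviation P where "P \<equiv> qpoch q"
abbreviation iP where "iP \<equiv> qpoch_inv q"

lemma one_minus_nz: assumes "n > 0" shows "1 - q ^ n \<noteq> 0"
proof -
  obtain m where "n = Suc m" using assms by (cases n) auto
  then show ?thesis using Pnz[of n] qpoch_Suc[of q m] by auto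
qed

definition qbin :: "nat \<Rightarrow> nat \<Rightarrow> complex" where
  "qbin n k = (if k \<le> n then P n / (P k * P (n - k)) else 0)"

lemma qbin_0[simp]: "qbin n 0 = 1" using Pnz[of n] by (simp add: qbin_def)
lemma qbin_n[simp]: "qbin n n = 1" using Pnz[of n] by (simp add: qbin_def)
lemma qbin_gt[simp]: "n < k \<Longrightarrow> qbin n k = 0" by (simp add: qbin_def)

lemma pascal_alg1:
  fixes X Y Z a b :: complex
  assumes "Y \<noteq> 0" "Z \<noteq> 0" "1 - a \<noteq> 0" "1 - b \<noteq> 0"
  shows "X * (1 - a * b) / ((Y * (1 - a)) * (Z * (1 - b))) = X / (Y * (Z * (1 - b))) + a * (X / ((Y * (1 - a)) * Z))"
  using assms by (simp add: divide_simps) (simp add: algebra_simps)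

lemma pascal_alg2:
  fixes X Y Z a b :: complex
  assumes "Y \<noteq> 0" "Z \<noteq> 0" "1 - a \<noteq> 0" "1 - b \<noteq> 0"
  shows "X * (1 - a * b) / ((Y * (1 - a)) * (Z * (1 - b))) = b * (X / (Y * (Z * (1 - b)))) + X / ((Y * (1 - a)) * Z)"
  using assms by (simp add: divide_simps) (simp add: algebra_simps)

lemma pascal_split:
  assumes "k \<le> n" "k \<noteq> n"
  obtains d where "n = k + Suc d" "Suc n - Suc k = Suc d" "n - k = Suc d" "n - Suc k = d"
    "q ^ Suc n = q ^ Suc k * q ^ Suc d"
proof -
  define d where "d = n - Suc k"
  have d: "n = k + Suc d" using assms unfolding d_def by simp
  have "q ^ Suc n = q ^ (Suc k + Suc d)" using d by simp
  then have "q ^ Suc n = q ^ Suc k * q ^ Suc d" by (simp only: power_add)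
  moreover have "Suc n - Suc k = Suc d" "n - k = Suc d" "n - Suc k = d" using d by simp_all
  ultimately show ?thesis using that d by blast
qed

lemma pascal1: "qbin (Suc n) (Suc k) = qbin n k + q ^ Suc k * qbin n (Suc k)"
proof (cases "k \<le> n")
  case False then show ?thesis by (simp add: qbin_def)
next
  case True
  show ?thesis
  proof (cases "k = n")
    case True then show ?thesis by simp
  next
    case False
    then obtain d where d: "n = k + Suc d" "Suc n - Suc k = Suc d" "n - k = Suc d" "n - Suc k = d"
      "q ^ Suc n = q ^ Suc k * q ^ Suc d" using pascal_split \<open>k \<le> n\<close> by blast
    have "qbin (Suc n) (Suc k) = P (Suc n) / (P (Suc k) * P (Suc d))"
      using \<open>k \<le> n\<close> unfolding qbin_def d(2) by simp
    also have "\<dots> = P n * (1 - q ^ Suc k * q ^ Suc d) / ((P k * (1 - q ^ Suc k)) * (P d * (1 - q ^ Suc d)))"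
      unfolding qpoch_Suc[of q n] qpoch_Suc[of q k] qpoch_Suc[of q d] d(5) ..
    also have "\<dots> = P n / (P k * (P d * (1 - q ^ Suc d))) + q ^ Suc k * (P n / ((P k * (1 - q ^ Suc k)) * P d))"
      by (rule pascal_alg1[OF Pnz Pnz one_minus_nz[of "Suc k"] one_minus_nz[of "Suc d"]]) simp_all
    also have "\<dots> = qbin n k + q ^ Suc k * qbin n (Suc k)"
    proof -
      have e1: "qbin n k = P n / (P k * (P d * (1 - q ^ Suc d)))"
        using \<open>k \<le> n\<close> unfolding qbin_def d(3) qpoch_Suc[of q d] by (simp only: if_True)
      have e2: "qbin n (Suc k) = P n / ((P k * (1 - q ^ Suc k)) * P d)"
      proof -
        have "Suc k \<le> n" using \<open>k \<le> n\<close> \<open>k \<noteq> n\<close> by simp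
        then show ?thesis unfolding qbin_def d(4) qpoch_Suc[of q k] by (simp only: if_True)
      qed
      show ?thesis unfolding e1 e2 ..
    qed
    finally show ?thesis .
  qed
qed

lemma pascal2: "qbin (Suc n) (Suc k) = q ^ (n - k) * qbin n k + qbin n (Suc k)"
proof (cases "k \<le> n")
  case False then show ?thesis by (simp add: qbin_def)
next
  case True
  show ?thesis
  proof (cases "k = n")
    case True then show ?thesis by simp
  next
    case False
    then obtain d where d: "n = k + Suc d" "Suc n - Suc k = Suc d" "n - k = Suc d" "n - Suc k = d"
      "q ^ Suc n = q ^ Suc k * q ^ Suc d" using pascal_split \<open>k \<le> n\<close> by blast
    have "qbin (Suc n) (Suc k) = P (Suc n) / (P (Suc k) * P (Suc d))"
      using \<open>k \<le> n\<close> unfolding qbin_def d(2) by simp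
    also have "\<dots> = P n * (1 - q ^ Suc k * q ^ Suc d) / ((P k * (1 - q ^ Suc k)) * (P d * (1 - q ^ Suc d)))"
      unfolding qpoch_Suc[of q n] qpoch_Suc[of q k] qpoch_Suc[of q d] d(5) ..
    also have "\<dots> = q ^ Suc d * (P n / (P k * (P d * (1 - q ^ Suc d)))) + (P n / ((P k * (1 - q ^ Suc k)) * P d))"
      by (rule pascal_alg2[OF Pnz Pnz one_minus_nz[of "Suc k"] one_minus_nz[of "Suc d"]]) simp_all
    also have "\<dots> = q ^ (n - k) * qbin n k + qbin n (Suc k)"
    proof -
      have e1: "qbin n k = P n / (P k * (P d * (1 - q ^ Suc d)))"
        using \<open>k \<le> n\<close> unfolding qbin_def d(3) qpoch_Suc[of q d] by (simp only: if_True)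
      have e2: "qbin n (Suc k) = P n / ((P k * (1 - q ^ Suc k)) * P d)"
      proof -
        have "Suc k \<le> n" using \<open>k \<le> n\<close> \<open>k \<noteq> n\<close> by simp
        then show ?thesis unfolding qbin_def d(4) qpoch_Suc[of q k] by (simp only: if_True)
      qed
      show ?thesis unfolding e1 e2 d(3) ..
    qed
    finally show ?thesis .
  qed
qed

lemma pow_shuffle: "a + b = c + d \<Longrightarrow> q ^ a * (q ^ b * X) = q ^ c * (q ^ d * X)"
  by (metis mult.assoc power_add)

lemma vandermonde:
  "(\<Sum>i\<le>C. q ^ ((A - i) * (C - i)) * qbin A i * qbin B (C - i)) = qbin (A + B) C"
proof (induction A arbitrary: C)
  case 0
  show ?case
  proof (cases C)
    case 0 then show ?thesis by simp
  next
    case (Suc c)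
    then show ?thesis by (simp add: sum.atMost_Suc_shift del: sum.atMost_Suc)
  qed
next
  case (Suc A)
  show ?case
  proof (cases C)
    case 0 then show ?thesis by simp
  next
    case (Suc c)
    have h1: "(\<Sum>i\<le>Suc c. q ^ ((Suc A - i) * (Suc c - i)) * qbin (Suc A) i * qbin B (Suc c - i))
        = q ^ (Suc A * Suc c) * qbin B (Suc c) + (\<Sum>i\<le>c. q ^ ((A - i) * (c - i)) * qbin (Suc A) (Suc i) * qbin B (c - i))"
      by (simp add: sum.atMost_Suc_shift del: sum.atMost_Suc)
    have h2: "(\<Sum>i\<le>c. q ^ ((A - i) * (c - i)) * qbin (Suc A) (Suc i) * qbin B (c - i))
        = (\<Sum>i\<le>c. q ^ ((A - i) * (c - i)) * qbin A i * qbin B (c - i))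
        + (\<Sum>i\<le>c. q ^ ((A - i) * (c - i)) * (q ^ Suc i * (qbin A (Suc i) * qbin B (c - i))))"
      by (simp add: pascal1 sum.distrib algebra_simps)
    have h3: "q ^ Suc c * qbin (A + B) (Suc c)
        = q ^ Suc c * (q ^ (A * Suc c) * qbin B (Suc c) + (\<Sum>i\<le>c. q ^ ((A - Suc i) * (c - i)) * (qbin A (Suc i) * qbin B (c - i))))"
      using Suc.IH[of "Suc c"] by (simp add: sum.atMost_Suc_shift mult.assoc del: sum.atMost_Suc)
    have h4: "q ^ Suc c * (q ^ (A * Suc c) * qbin B (Suc c)) = q ^ (Suc A * Suc c) * qbin B (Suc c)"
    proof -
      have "Suc c + A * Suc c = Suc A * Suc c" by simp
      then show ?thesis by (metis mult.assoc power_add)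
    qed
    have h5: "q ^ Suc c * (q ^ ((A - Suc i) * (c - i)) * (qbin A (Suc i) * qbin B (c - i)))
        = q ^ ((A - i) * (c - i)) * (q ^ Suc i * (qbin A (Suc i) * qbin B (c - i)))" if "i \<le> c" for i
    proof (cases "Suc i \<le> A")
      case True
      define a where "a = A - Suc i"
      have a: "A = Suc i + a" using True unfolding a_def by simp
      define b where "b = c - (i)"
      have b: "c = i + b" using \<open>i \<le> c\<close> unfolding b_def by simp
      show ?thesis by (rule pow_shuffle) (simp add: a b algebra_simps)
    next
      case False then show ?thesis by simp
    qed
    have h6: "q ^ Suc c * (\<Sum>i\<le>c. q ^ ((A - Suc i) * (c - i)) * (qbin A (Suc i) * qbin B (c - i)))
       = (\<Sum>i\<le>c. q ^ ((A - i) * (c - i)) * (q ^ Suc i * (qbin A (Suc i) * qbin B (c - i))))"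
      unfolding sum_distrib_left by (rule sum.cong[OF refl]) (rule h5, simp)
    have "(\<Sum>i\<le>C. q ^ ((Suc A - i) * (C - i)) * qbin (Suc A) i * qbin B (C - i))
        = qbin (A + B) c + q ^ Suc c * qbin (A + B) (Suc c)"
      unfolding Suc h1 h2 h3 Suc.IH[of c] distrib_left h4 h6 by (simp add: algebra_simps)
    also have "\<dots> = qbin (Suc A + B) C" using pascal1[of "A + B" c] Suc by simp
    finally show ?thesis .
  qed
qed

lemma vandermonde2:
  "(\<Sum>i\<le>C. q ^ (i * (B + i - C)) * qbin A i * qbin B (C - i)) = qbin (A + B) C"
proof -
  have "qbin (A + B) C = (\<Sum>i\<le>C. q ^ ((B - i) * (C - i)) * qbin B i * qbin A (C - i))"
    using vandermonde[of B C A] by (simp add: add.commute)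
  also have "\<dots> = (\<Sum>i=0..C. q ^ ((B - i) * (C - i)) * qbin B i * qbin A (C - i))"
    by (simp add: atMost_atLeast0)
  also have "\<dots> = (\<Sum>i=0..C. q ^ ((B - (C + 0 - i)) * (C - (C + 0 - i))) * qbin B (C + 0 - i) * qbin A (C - (C + 0 - i)))"
    by (rule sum.atLeastAtMost_rev)
  also have "\<dots> = (\<Sum>i=0..C. q ^ (i * (B + i - C)) * qbin A i * qbin B (C - i))"
  proof (rule sum.cong[OF refl])
    fix i assume "i \<in> {0..C}"
    then have i: "i \<le> C" by simp
    show "q ^ ((B - (C + 0 - i)) * (C - (C + 0 - i))) * qbin B (C + 0 - i) * qbin A (C - (C + 0 - i))
        = q ^ (i * (B + i - C)) * qbin A i * qbin B (C - i)"
    proof (cases "C - i \<le> B")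
      case True
      then have "(B - (C + 0 - i)) * (C - (C + 0 - i)) = i * (B + i - C)" using i by simp
      then show ?thesis using i by (simp add: mult.commute)
    next
      case False then show ?thesis by simp
    qed
  qed
  finally show ?thesis by (simp add: atMost_atLeast0)
qed

lemma qsum_Q:
  "(\<Sum>i\<le>M. q ^ (i * i + a * i) * qbin M i / P (a + i)) = 1 / P (a + M)"
proof (induction M arbitrary: a)
  case 0 then show ?case by simp
next
  case (Suc M)
  have split: "(\<Sum>i\<le>Suc M. q ^ (i * i + a * i) * qbin (Suc M) i / P (a + i))
      = 1 / P a + (\<Sum>i\<le>M. q ^ (Suc i * Suc i + a * Suc i) * qbin M (Suc i) / P (a + Suc i))
        + (\<Sum>i\<le>M. q ^ (Suc i * Suc i + a * Suc i) * (q ^ (M - i) * qbin M i) / P (a + Suc i))"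
  proof -
    have pt: "q ^ (Suc i * Suc i + a * Suc i) * qbin (Suc M) (Suc i) / P (a + Suc i)
       = q ^ (Suc i * Suc i + a * Suc i) * qbin M (Suc i) / P (a + Suc i)
         + q ^ (Suc i * Suc i + a * Suc i) * (q ^ (M - i) * qbin M i) / P (a + Suc i)" for i
      unfolding pascal2 distrib_left add_divide_distrib by (rule add.commute)
    have "(\<Sum>i\<le>Suc M. q ^ (i * i + a * i) * qbin (Suc M) i / P (a + i))
       = q ^ (0 * 0 + a * 0) * qbin (Suc M) 0 / P (a + 0) + (\<Sum>i\<le>M. q ^ (Suc i * Suc i + a * Suc i) * qbin (Suc M) (Suc i) / P (a + Suc i))"
      by (rule sum.atMost_Suc_shift)
    also have "\<dots> = 1 / P a + ((\<Sum>i\<le>M. q ^ (Suc i * Suc i + a * Suc i) * qbin M (Suc i) / P (a + Suc i))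
        + (\<Sum>i\<le>M. q ^ (Suc i * Suc i + a * Suc i) * (q ^ (M - i) * qbin M i) / P (a + Suc i)))"
      unfolding pt sum.distrib by simp
    finally show ?thesis by (simp only: add.assoc)
  qed
  have sA: "1 / P a + (\<Sum>i\<le>M. q ^ (Suc i * Suc i + a * Suc i) * qbin M (Suc i) / P (a + Suc i)) = 1 / P (a + M)"
  proof -
    have e1: "(\<Sum>i\<le>Suc M. q ^ (i * i + a * i) * qbin M i / P (a + i))
        = (\<Sum>i\<le>M. q ^ (i * i + a * i) * qbin M i / P (a + i)) + q ^ (Suc M * Suc M + a * Suc M) * qbin M (Suc M) / P (a + Suc M)"
      by (rule sum.atMost_Suc)
    have e2: "(\<Sum>i\<le>Suc M. q ^ (i * i + a * i) * qbin M i / P (a + i))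
        = q ^ (0 * 0 + a * 0) * qbin M 0 / P (a + 0) + (\<Sum>i\<le>M. q ^ (Suc i * Suc i + a * Suc i) * qbin M (Suc i) / P (a + Suc i))"
      by (rule sum.atMost_Suc_shift)
    have e3: "qbin M (Suc M) = 0" by simp
    have e4: "q ^ (0 * 0 + a * 0) * qbin M 0 / P (a + 0) = 1 / P a" by simp
    show ?thesis using e1 e2 Suc.IH[of a] unfolding e3 e4 by simp
  qed
  have sB: "(\<Sum>i\<le>M. q ^ (Suc i * Suc i + a * Suc i) * (q ^ (M - i) * qbin M i) / P (a + Suc i))
      = q ^ Suc (a + M) * (\<Sum>i\<le>M. q ^ (i * i + Suc a * i) * qbin M i / P (Suc a + i))"
  proof -
    have pt: "q ^ (Suc i * Suc i + a * Suc i) * (q ^ (M - i) * qbin M i) / P (a + Suc i)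
        = q ^ Suc (a + M) * (q ^ (i * i + Suc a * i) * qbin M i / P (Suc a + i))" if "i \<le> M" for i
    proof -
      define b where "b = M - (i)"
      have b: "M = i + b" using that unfolding b_def by simp
      have "q ^ (Suc i * Suc i + a * Suc i) * (q ^ (M - i) * qbin M i) = q ^ Suc (a + M) * (q ^ (i * i + Suc a * i) * qbin M i)"
        by (rule pow_shuffle) (simp add: b algebra_simps)
      moreover have "a + Suc i = Suc a + i" by simp
      ultimately show ?thesis by (simp only: times_divide_eq_right)
    qed
    show ?thesis unfolding sum_distrib_left by (rule sum.cong[OF refl]) (rule pt, simp)
  qed
  have fin: "1 / P (a + M) + q ^ Suc (a + M) * (1 / P (Suc a + M)) = 1 / P (a + Suc M)"
  proof -
    have e: "Suc a + M = Suc (a + M)" "a + Suc M = Suc (a + M)" by simp_all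
    have alg: "X \<noteq> 0 \<Longrightarrow> 1 - y \<noteq> 0 \<Longrightarrow> 1 / X + y * (1 / (X * (1 - y))) = 1 / (X * (1 - y))" for X y :: complex
      by (simp add: divide_simps)
    show ?thesis unfolding e qpoch_Suc by (rule alg[OF Pnz one_minus_nz]) simp
  qed
  show ?case unfolding split sA sB Suc.IH[of "Suc a"] fin ..
qed

fun tri :: "nat \<Rightarrow> nat" where
  "tri 0 = 0" | "tri (Suc i) = tri i + i"

lemma rothe: "(\<Prod>t<n. (1 - x * q ^ t)) = (\<Sum>i\<le>n. (-1) ^ i * q ^ tri i * qbin n i * x ^ i)"
proof (induction n)
  case 0 then show ?case by simp
next
  case (Suc n)
  define R where "R = (\<Sum>i\<le>n. (-1) ^ i * q ^ tri i * qbin n i * x ^ i)"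
  have split: "(\<Sum>i\<le>Suc n. (-1) ^ i * q ^ tri i * qbin (Suc n) i * x ^ i)
     = 1 + (\<Sum>i\<le>n. (-1) ^ Suc i * q ^ tri (Suc i) * qbin n (Suc i) * x ^ Suc i)
       + (\<Sum>i\<le>n. (-1) ^ Suc i * q ^ tri (Suc i) * (q ^ (n - i) * qbin n i) * x ^ Suc i)"
  proof -
    have pt: "(-1) ^ Suc i * q ^ tri (Suc i) * qbin (Suc n) (Suc i) * x ^ Suc i
       = (-1) ^ Suc i * q ^ tri (Suc i) * qbin n (Suc i) * x ^ Suc i
         + (-1) ^ Suc i * q ^ tri (Suc i) * (q ^ (n - i) * qbin n i) * x ^ Suc i" for i
      unfolding pascal2 distrib_left distrib_right by (rule add.commute)
    have "(\<Sum>i\<le>Suc n. (-1) ^ i * q ^ tri i * qbin (Suc n) i * x ^ i)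
       = (-1) ^ 0 * q ^ tri 0 * qbin (Suc n) 0 * x ^ 0 + (\<Sum>i\<le>n. (-1) ^ Suc i * q ^ tri (Suc i) * qbin (Suc n) (Suc i) * x ^ Suc i)"
      by (rule sum.atMost_Suc_shift)
    also have "\<dots> = 1 + ((\<Sum>i\<le>n. (-1) ^ Suc i * q ^ tri (Suc i) * qbin n (Suc i) * x ^ Suc i)
       + (\<Sum>i\<le>n. (-1) ^ Suc i * q ^ tri (Suc i) * (q ^ (n - i) * qbin n i) * x ^ Suc i))"
      unfolding pt sum.distrib by simp
    finally show ?thesis by (simp only: add.assoc)
  qed
  have sA: "1 + (\<Sum>i\<le>n. (-1) ^ Suc i * q ^ tri (Suc i) * qbin n (Suc i) * x ^ Suc i) = R"
  proof -
    have "R = (\<Sum>i\<le>Suc n. (-1) ^ i * q ^ tri i * qbin n i * x ^ i)" unfolding R_def by simp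
    then show ?thesis by (simp add: sum.atMost_Suc_shift tri.simps(1) del: sum.atMost_Suc tri.simps(2) power_Suc)
  qed
  have sB: "(\<Sum>i\<le>n. (-1) ^ Suc i * q ^ tri (Suc i) * (q ^ (n - i) * qbin n i) * x ^ Suc i) = - (x * q ^ n) * R"
  proof -
    have pt: "(-1) ^ Suc i * q ^ tri (Suc i) * (q ^ (n - i) * qbin n i) * x ^ Suc i
        = - (x * q ^ n) * ((-1) ^ i * q ^ tri i * qbin n i * x ^ i)" if "i \<le> n" for i
    proof -
      define b where "b = n - (i)"
      have b: "n = i + b" using that unfolding b_def by simp
      have "q ^ tri (Suc i) * q ^ (n - i) = q ^ n * q ^ tri i"
        by (simp add: b power_add[symmetric] algebra_simps)
      then show ?thesis by (simp add: algebra_simps)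
    qed
    show ?thesis unfolding R_def sum_distrib_left by (rule sum.cong[OF refl]) (rule pt, simp)
  qed
  show ?case unfolding prod.lessThan_Suc Suc.IH split sA sB R_def[symmetric] by (simp add: algebra_simps)
qed

lemma unit_pair_nat:
  assumes "j > 0"
  shows "(\<Sum>i\<le>2 * j. (-1) ^ i * q ^ tri i * qbin (2 * j) i * (inverse q ^ j) ^ i) = 0"
proof -
  have "(\<Prod>t<2 * j. (1 - inverse q ^ j * q ^ t)) = 0"
  proof -
    have "j \<in> {..<2 * j}" using assms by simp
    moreover have "1 - inverse q ^ j * q ^ j = 0" using qnz by (simp add: power_inverse[symmetric] field_simps)
    ultimately show ?thesis by (metis (no_types, lifting) finite_lessThan prod_zero_iff)
  qed
  then show ?thesis using rothe[where n="2 * j" and x="inverse q ^ j"] by simp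
qed

end


lemma sum_cut_one:
  fixes f :: "nat \<Rightarrow> 'a::comm_monoid_add"
  assumes "\<And>k. c < k \<Longrightarrow> k \<le> a \<Longrightarrow> f k = 0" "c \<le> a"
  shows "(\<Sum>k\<le>a. f k) = (\<Sum>k\<le>c. f k)"
  by (rule sum.mono_neutral_right) (use assms in auto)

lemma sum_cut:
  fixes f :: "nat \<Rightarrow> 'a::comm_monoid_add"
  assumes "\<And>k. c < k \<Longrightarrow> k \<le> max a b \<Longrightarrow> f k = 0" "c \<le> a" "c \<le> b"
  shows "(\<Sum>k\<le>a. f k) = (\<Sum>k\<le>b. f k)"
proof -
  have "(\<Sum>k\<le>a. f k) = (\<Sum>k\<le>c. f k)" by (rule sum_cut_one) (use assms in auto)
  moreover have "(\<Sum>k\<le>b. f k) = (\<Sum>k\<le>c. f k)" by (rule sum_cut_one) (use assms in auto)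
  ultimately show ?thesis by simp
qed

lemma sum_shift_lower:
  fixes f :: "nat \<Rightarrow> 'a::comm_monoid_add"
  assumes "\<And>j. j < s \<Longrightarrow> f j = 0" "s \<le> m"
  shows "(\<Sum>j\<le>m. f j) = (\<Sum>i\<le>m - s. f (s + i))"
proof -
  have "(\<Sum>j\<le>m. f j) = (\<Sum>j\<in>{s..m}. f j)"
    by (rule sum.mono_neutral_right) (use assms in auto)
  also have "\<dots> = (\<Sum>j\<in>{0 + s..(m - s) + s}. f j)" using assms by simp
  also have "\<dots> = (\<Sum>i\<in>{0..m - s}. f (i + s))" by (rule sum.shift_bounds_cl_nat_ivl)
  also have "\<dots> = (\<Sum>i\<le>m - s. f (s + i))" by (simp add: atMost_atLeast0 add.commute)
  finally show ?thesis .
qed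

context qc begin

lemma iP_neg: "x < 0 \<Longrightarrow> iP x = 0" by (simp add: qpoch_inv_def)
lemma iP_nat: "iP (int a) = 1 / P a" by (simp add: qpoch_inv_def)
lemma iP_diff: "iP (int a - int b) = (if b \<le> a then 1 / P (a - b) else 0)"
proof (cases "b \<le> a")
  case True
  then have "int a - int b = int (a - b)" by simp
  then show ?thesis using True iP_nat[of "a - b"] by simp
next
  case False then show ?thesis by (simp add: iP_neg)
qed
lemma iP_add: "iP (int a + int b) = 1 / P (a + b)"
  using iP_nat[of "a + b"] by simp

definition K :: "nat \<Rightarrow> int \<Rightarrow> complex" where
  "K n k = iP (int n - k) * iP (int n + k)"

lemma K_sym: "K n (- k) = K n k" by (simp add: K_def mult.commute)

lemma K_nat: "K n (int j) = (if j \<le> n then 1 / (P (n - j) * P (n + j)) else 0)"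
  unfolding K_def iP_diff iP_add by simp

lemma K_abs: "K n k = K n (int (nat \<bar>k\<bar>))"
  by (cases "k \<ge> 0") (simp_all add: K_sym[of n k, symmetric])

lemma K_out: "n < nat \<bar>k\<bar> \<Longrightarrow> K n k = 0"
  using K_abs[of n k] K_nat[of n "nat \<bar>k\<bar>"] by simp

definition cc :: "nat \<Rightarrow> nat \<Rightarrow> nat \<Rightarrow> complex" where
  "cc n N j = (if j \<le> n \<and> j \<le> N then q ^ ((n - j) * (N - j)) / (P (n - j) * P (N - j)) else 0)"

lemma LL_nat:
  "P (n + N) * (K n (int t) * K N (int t)) = (\<Sum>j\<le>min n N. cc n N j * K j (int t))"
proof (cases "t \<le> min n N")
  case False
  then have h: "K n (int t) * K N (int t) = 0" by (auto simp: K_nat)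
  have z: "cc n N j * K j (int t) = 0" if "j \<le> min n N" for j
  proof -
    have "\<not> t \<le> j" using that False by auto
    then show ?thesis by (simp add: K_nat)
  qed
  have "(\<Sum>j\<le>min n N. cc n N j * K j (int t)) = 0" using z by (intro sum.neutral) auto
  then show ?thesis using h by simp
next
  case True
  define m where "m = min n N"
  define A where "A = n - t"
  define B where "B = N + t"
  define C where "C = N - t"
  define g where "g i = q ^ ((A - i) * (C - i)) * qbin A i * qbin B (C - i)" for i
  have tn: "t \<le> n" "t \<le> N" using True by auto
  have "(\<Sum>j\<le>m. cc n N j * K j (int t)) = (\<Sum>i\<le>m - t. cc n N (t + i) * K (t + i) (int t))"
    by (rule sum_shift_lower) (use True in \<open>auto simp: K_nat m_def\<close>)
  also have "\<dots> = (\<Sum>i\<le>m - t. g i / (P A * P B))"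
  proof (rule sum.cong[OF refl])
    fix i assume "i \<in> {..m - t}"
    then have i: "t + i \<le> n" "t + i \<le> N" using True by (auto simp: m_def)
    have e: "n - (t + i) = A - i" "N - (t + i) = C - i" "t + i - t = i" "t + i + t = B - (C - i)"
      "i \<le> A" "C - i \<le> B"
      using i tn by (auto simp: A_def B_def C_def)
    have c1: "cc n N (t + i) = q ^ ((A - i) * (C - i)) / (P (A - i) * P (C - i))"
      unfolding cc_def using i by (simp only: e(1) e(2) if_True simp_thms)
    have k1: "K (t + i) (int t) = 1 / (P i * P (B - (C - i)))"
      unfolding K_nat using i by (simp only: e(3) e(4) le_add1 if_True)
    have g1: "g i = q ^ ((A - i) * (C - i)) * (P A / (P i * P (A - i))) * (P B / (P (C - i) * P (B - (C - i))))"
      unfolding g_def qbin_def using e(5) e(6) by (simp only: if_True)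
    have alg: "x / (a * b) * (1 / (ii * c)) = x * (pA / (ii * a)) * (pB / (b * c)) / (pA * pB)"
      if "pA \<noteq> 0" "pB \<noteq> 0" "ii \<noteq> 0" "a \<noteq> 0" "b \<noteq> 0" "c \<noteq> 0" for x a b c ii pA pB :: complex
      using that by (simp add: divide_simps)
    show "cc n N (t + i) * K (t + i) (int t) = g i / (P A * P B)"
      unfolding c1 k1 g1 by (rule alg) (simp_all add: Pnz)
  qed
  also have "\<dots> = (\<Sum>i\<le>C. g i) / (P A * P B)"
  proof -
    have "(\<Sum>i\<le>m - t. g i) = (\<Sum>i\<le>C. g i)"
    proof (rule sum_cut[where c = "min A C"])
      show "g k = 0" if "min A C < k" "k \<le> max (m - t) C" for k
      proof -
        have "k \<le> C" using that by (auto simp: A_def C_def m_def)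
        then have "A < k" using that by simp
        then show ?thesis by (simp add: g_def)
      qed
    qed (auto simp: A_def C_def m_def)
    then show ?thesis by (simp add: sum_divide_distrib[symmetric])
  qed
  also have "\<dots> = qbin (A + B) C / (P A * P B)" unfolding g_def vandermonde ..
  also have "\<dots> = P (n + N) * (K n (int t) * K N (int t))"
  proof -
    have e: "A + B = n + N" "C \<le> A + B" "A + B - C = n + t" using tn by (auto simp: A_def B_def C_def)
    have e2: "n - t = A" "N - t = C" "N + t = B" by (simp_all add: A_def B_def C_def)
    have q1: "qbin (A + B) C = P (n + N) / (P C * P (n + t))"
      unfolding qbin_def using e by (simp only: if_True)
    have k1: "K n (int t) * K N (int t) = 1 / (P A * P (n + t)) * (1 / (P C * P B))"
      unfolding K_nat using tn by (simp only: e2 if_True)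
    have alg: "x / (c * d) / (a * b) = x * (1 / (a * d) * (1 / (c * b)))" for x a b c d :: complex
      by simp
    show ?thesis unfolding q1 k1 by (rule alg)
  qed
  finally show ?thesis by (simp add: m_def)
qed

end


context qc begin

lemma tri2: "2 * int (tri i) = int i * int i - int i"
  by (induction i) (simp_all add: algebra_simps)

lemma LL_int: "P (n + N) * (K n k * K N k) = (\<Sum>j\<le>min n N. cc n N j * K j k)"
  using LL_nat[of n N "nat \<bar>k\<bar>"] by (simp only: K_abs[symmetric])

lemma LLsum:
  "P (n + N) * (\<Sum>k\<in>S. a k * (K n k * K N k)) = (\<Sum>j\<le>min n N. cc n N j * (\<Sum>k\<in>S. a k * K j k))"
proof -
  have "P (n + N) * (\<Sum>k\<in>S. a k * (K n k * K N k)) = (\<Sum>k\<in>S. a k * (P (n + N) * (K n k * K N k)))"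
    by (simp add: sum_distrib_left mult.left_commute)
  also have "\<dots> = (\<Sum>k\<in>S. a k * (\<Sum>j\<le>min n N. cc n N j * K j k))" by (simp only: LL_int)
  also have "\<dots> = (\<Sum>k\<in>S. \<Sum>j\<le>min n N. cc n N j * (a k * K j k))"
    by (simp add: sum_distrib_left mult.left_commute)
  also have "\<dots> = (\<Sum>j\<le>min n N. \<Sum>k\<in>S. cc n N j * (a k * K j k))" by (rule sum.swap)
  also have "\<dots> = (\<Sum>j\<le>min n N. cc n N j * (\<Sum>k\<in>S. a k * K j k))" by (simp add: sum_distrib_left)
  finally show ?thesis .
qed

lemma sym_range: "(\<Sum>k\<in>{- int j..int j}. f k) = (\<Sum>i\<le>2 * j. f (int i - int j))"
  by (rule sum.reindex_bij_witness[where i="\<lambda>i. int i - int j" and j="\<lambda>k. nat (k + int j)"]) auto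

lemma restrict_K:
  assumes "j \<le> R"
  shows "(\<Sum>k\<in>{- int R..int R}. f k * K j k) = (\<Sum>k\<in>{- int j..int j}. f k * K j k)"
proof (rule sum.mono_neutral_right)
  show "\<forall>k\<in>{- int R..int R} - {- int j..int j}. f k * K j k = 0"
  proof
    fix k assume "k \<in> {- int R..int R} - {- int j..int j}"
    then have "j < nat \<bar>k\<bar>" by auto
    then show "f k * K j k = 0" by (simp add: K_out)
  qed
qed (use assms in auto)

definition u :: "int \<Rightarrow> complex" where "u k = (-1) powi k * q powi ((k * k - k) div 2)"

lemma u_shift:
  "u (int i - int j) = ((-1) powi (- int j) * q ^ tri (Suc j)) * ((-1) ^ i * q ^ tri i * (inverse q ^ j) ^ i)"
proof -
  define k where "k = int i - int j"
  have t1: "2 * int (tri i) = int i * int i - int i" by (rule tri2)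
  have t2: "2 * int (tri (Suc j)) = int (Suc j) * int (Suc j) - int (Suc j)" by (rule tri2)
  have "k * k - k = 2 * (int (tri i) + int (tri (Suc j)) - int i * int j)"
    unfolding k_def using t1 t2 by (simp add: algebra_simps)
  then have e: "(k * k - k) div 2 = int (tri i) + int (tri (Suc j)) + (- (int i * int j))" by simp
  have s: "(-1::complex) powi k = (-1) ^ i * (-1) powi (- int j)"
  proof -
    have "k = int i + (- int j)" unfolding k_def by simp
    then show ?thesis using power_int_add[of "-1::complex" "int i" "- int j"] by simp
  qed
  have t: "q powi (int (tri i) + int (tri (Suc j)) + (- (int i * int j))) = q ^ tri i * q ^ tri (Suc j) * q powi (- (int i * int j))"
  proof -
    have g: "q powi (A + B + C) = q powi A * q powi B * q powi C" for A B C :: int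
      using qnz by (simp add: power_int_add)
    show ?thesis unfolding g power_int_of_nat ..
  qed
  have v: "(inverse q ^ j) ^ i = q powi (- (int i * int j))"
  proof -
    have "(inverse q ^ j) ^ i = inverse (q ^ (i * j))" by (simp add: power_inverse[symmetric] power_mult[symmetric] mult.commute)
    also have "\<dots> = q powi (- (int i * int j))"
    proof -
      have "int i * int j = int (i * j)" by simp
      then show ?thesis by (simp only: power_int_minus power_int_of_nat)
    qed
    finally show ?thesis .
  qed
  show ?thesis unfolding u_def k_def[symmetric] e s t v by (simp add: algebra_simps)
qed

lemma K_shift: "i \<le> 2 * j \<Longrightarrow> K j (int i - int j) = qbin (2 * j) i / P (2 * j)"
proof -
  assume i: "i \<le> 2 * j"
  have "K j (int i - int j) = iP (int (2 * j) - int i) * iP (int i)" unfolding K_def by (simp add: algebra_simps)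
  also have "\<dots> = 1 / P (2 * j - i) * (1 / P i)" unfolding iP_diff iP_nat using i by simp
  also have "\<dots> = qbin (2 * j) i / P (2 * j)" using i Pnz by (simp add: qbin_def field_simps)
  finally show ?thesis .
qed

lemma U_int:
  assumes "j \<le> R"
  shows "(\<Sum>k\<in>{- int R..int R}. u k * K j k) = (if j = 0 then 1 else 0)"
proof -
  have "(\<Sum>k\<in>{- int R..int R}. u k * K j k) = (\<Sum>k\<in>{- int j..int j}. u k * K j k)"
    by (rule restrict_K[OF assms])
  also have "\<dots> = (\<Sum>i\<le>2 * j. u (int i - int j) * K j (int i - int j))" by (rule sym_range)
  also have "\<dots> = (if j = 0 then 1 else 0)"
  proof (cases "j = 0")
    case True
    have "iP 0 = 1" by (simp add: qpoch_inv_def)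
    then show ?thesis using True by (simp add: u_def K_def)
  next
    case False
    define c where "c = ((-1) powi (- int j) * q ^ tri (Suc j)) / P (2 * j)"
    have "(\<Sum>i\<le>2 * j. u (int i - int j) * K j (int i - int j))
        = (\<Sum>i\<le>2 * j. c * ((-1) ^ i * q ^ tri i * qbin (2 * j) i * (inverse q ^ j) ^ i))"
    proof (rule sum.cong[OF refl])
      fix i assume "i \<in> {..2 * j}"
      then have i: "i \<le> 2 * j" by simp
      show "u (int i - int j) * K j (int i - int j) = c * ((-1) ^ i * q ^ tri i * qbin (2 * j) i * (inverse q ^ j) ^ i)"
        unfolding u_shift K_shift[OF i] c_def by (simp add: algebra_simps)
    qed
    also have "\<dots> = c * (\<Sum>i\<le>2 * j. (-1) ^ i * q ^ tri i * qbin (2 * j) i * (inverse q ^ j) ^ i)"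
      by (simp add: sum_distrib_left)
    also have "\<dots> = 0" using unit_pair_nat[of j] False by simp
    finally show ?thesis using False by simp
  qed
  finally show ?thesis .
qed

lemma Q_nat: "q ^ (t * t) * K h (int t) = (\<Sum>j\<le>h. q ^ (j * j) / P (h - j) * K j (int t))"
proof (cases "t \<le> h")
  case False
  have z: "q ^ (j * j) / P (h - j) * K j (int t) = 0" if "j \<le> h" for j
  proof -
    have "\<not> t \<le> j" using that False by auto
    then show ?thesis by (simp add: K_nat)
  qed
  have "(\<Sum>j\<le>h. q ^ (j * j) / P (h - j) * K j (int t)) = 0" using z by (intro sum.neutral) auto
  then show ?thesis using False by (simp add: K_nat)
next
  case True
  define M where "M = h - t"
  have "(\<Sum>j\<le>h. q ^ (j * j) / P (h - j) * K j (int t)) = (\<Sum>i\<le>h - t. q ^ ((t + i) * (t + i)) / P (h - (t + i)) * K (t + i) (int t))"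
    by (rule sum_shift_lower) (use True in \<open>auto simp: K_nat\<close>)
  also have "\<dots> = (\<Sum>i\<le>M. q ^ (t * t) * (q ^ (i * i + (2 * t) * i) * qbin M i / P (2 * t + i)) / P M)"
  proof (rule sum.cong)
    fix i assume "i \<in> {..M}"
    then have i: "i \<le> M" by simp
    have e: "h - (t + i) = M - i" "t + i - t = i" "t + i + t = 2 * t + i" using True by (auto simp: M_def)
    have k1: "K (t + i) (int t) = 1 / (P i * P (2 * t + i))"
      unfolding K_nat by (simp only: e le_add1 if_True)
    have b1: "qbin M i = P M / (P i * P (M - i))" using i by (simp add: qbin_def)
    have ex: "q ^ ((t + i) * (t + i)) = q ^ (t * t) * q ^ (i * i + (2 * t) * i)"
    proof -
      have "(t + i) * (t + i) = t * t + (i * i + (2 * t) * i)" by algebra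
      then show ?thesis by (simp only: power_add)
    qed
    have alg: "x * y / a * (1 / (ii * c)) = x * (y * (pM / (ii * a)) / c) / pM"
      if "pM \<noteq> 0" "a \<noteq> 0" "ii \<noteq> 0" "c \<noteq> 0" for x y a ii c pM :: complex
      using that by (simp add: divide_simps)
    show "q ^ ((t + i) * (t + i)) / P (h - (t + i)) * K (t + i) (int t)
        = q ^ (t * t) * (q ^ (i * i + (2 * t) * i) * qbin M i / P (2 * t + i)) / P M"
      unfolding k1 b1 ex e(1) by (rule alg) (simp_all add: Pnz)
  qed (simp add: M_def)
  also have "\<dots> = q ^ (t * t) * (\<Sum>i\<le>M. q ^ (i * i + (2 * t) * i) * qbin M i / P (2 * t + i)) / P M"
    by (simp add: sum_distrib_left sum_divide_distrib)
  also have "\<dots> = q ^ (t * t) * (1 / P (2 * t + M)) / P M" by (simp only: qsum_Q)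
  also have "\<dots> = q ^ (t * t) * K h (int t)"
  proof -
    have e1: "2 * t + M = h + t" and e2: "h - t = M" using True by (auto simp: M_def)
    have "K h (int t) = 1 / (P M * P (h + t))" unfolding K_nat e2 using True by simp
    then show ?thesis unfolding e1 by (simp add: mult.commute)
  qed
  finally show ?thesis ..
qed

lemma Q_int: "q powi (k * k) * K h k = (\<Sum>j\<le>h. q ^ (j * j) / P (h - j) * K j k)"
proof -
  have "k * k = int (nat \<bar>k\<bar> * nat \<bar>k\<bar>)" by (simp add: abs_mult_self_eq)
  then have "q powi (k * k) = q ^ (nat \<bar>k\<bar> * nat \<bar>k\<bar>)" by (simp only: power_int_of_nat)
  then show ?thesis using Q_nat[of "nat \<bar>k\<bar>" h] by (simp only: K_abs[symmetric])
qed

definition p :: "int \<Rightarrow> complex" where "p k = (-1) powi k * q powi ((3 * k^2 - k) div 2)"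

lemma p_u: "p k = u k * q powi (k * k)"
proof -
  have "3 * k^2 - k = (k * k - k) + 2 * (k * k)" by (simp add: power2_eq_square algebra_simps)
  then have "(3 * k^2 - k) div 2 = (k * k - k) div 2 + k * k" by simp
  then show ?thesis unfolding p_def u_def using qnz by (simp add: power_int_add mult.assoc)
qed

lemma D1:
  assumes "h \<le> R"
  shows "(\<Sum>k\<in>{- int R..int R}. p k * K h k) = 1 / P h"
proof -
  have "(\<Sum>k\<in>{- int R..int R}. p k * K h k) = (\<Sum>k\<in>{- int R..int R}. u k * (q powi (k * k) * K h k))"
    by (simp add: p_u mult.assoc)
  also have "\<dots> = (\<Sum>k\<in>{- int R..int R}. \<Sum>j\<le>h. q ^ (j * j) / P (h - j) * (u k * K j k))"
    by (simp only: Q_int sum_distrib_left mult.left_commute)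
  also have "\<dots> = (\<Sum>j\<le>h. q ^ (j * j) / P (h - j) * (\<Sum>k\<in>{- int R..int R}. u k * K j k))"
    by (subst sum.swap) (simp add: sum_distrib_left)
  also have "\<dots> = (\<Sum>j\<le>h. q ^ (j * j) / P (h - j) * (if j = 0 then 1 else 0))"
    using assms by (intro sum.cong refl) (simp add: U_int)
  also have "\<dots> = 1 / P h" by (simp add: sum.atMost_shift)
  finally show ?thesis .
qed

end

context qc begin

lemma solve_mul: "c \<noteq> 0 \<Longrightarrow> c * S = y \<Longrightarrow> S = y / (c::complex)"
  by (metis nonzero_mult_div_cancel_left)

lemma cc_sym: "cc n N j = cc N n j"
  by (simp add: cc_def mult.commute)

lemma Q2_le:
  assumes "i \<le> j"
  shows "(\<Sum>h\<le>min i j. cc i j h / P h) = 1 / (P i * P j)"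
proof -
  define a where "a = j - i"
  have ja: "j = a + i" using assms by (simp add: a_def)
  have "(\<Sum>h\<le>min i j. cc i j h / P h) = (\<Sum>h=0..i. cc i j h / P h)"
    using assms by (simp add: atMost_atLeast0)
  also have "\<dots> = (\<Sum>t=0..i. cc i j (i + 0 - t) / P (i + 0 - t))"
    by (rule sum.atLeastAtMost_rev)
  also have "\<dots> = (\<Sum>t=0..i. (q ^ (t * t + a * t) * qbin i t / P (a + t)) / P i)"
  proof (rule sum.cong[OF refl])
    fix t assume "t \<in> {0..i}"
    then have t: "t \<le> i" by simp
    have e: "i + 0 - t = i - t" "i - (i - t) = t" "j - (i - t) = a + t" using t ja by auto
    have c1: "cc i j (i - t) = q ^ (t * t + a * t) / (P t * P (a + t))"
    proof -
      have "(i - (i - t)) * (j - (i - t)) = t * t + a * t" unfolding e by (simp add: algebra_simps)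
      then show ?thesis unfolding cc_def using t assms by (simp add: e)
    qed
    have b1: "qbin i t = P i / (P t * P (i - t))" using t by (simp add: qbin_def)
    have alg: "x / (pt * pa) / pit = x * (pI / (pt * pit)) / pa / pI"
      if "pt \<noteq> 0" "pa \<noteq> 0" "pit \<noteq> 0" "pI \<noteq> 0" for x pt pa pit pI :: complex
      using that by (simp add: divide_simps)
    show "cc i j (i + 0 - t) / P (i + 0 - t) = q ^ (t * t + a * t) * qbin i t / P (a + t) / P i"
      unfolding e(1) c1 b1 by (rule alg) (simp_all add: Pnz)
  qed
  also have "\<dots> = (\<Sum>t\<le>i. q ^ (t * t + a * t) * qbin i t / P (a + t)) / P i"
    by (simp add: sum_divide_distrib atMost_atLeast0)
  also have "\<dots> = 1 / (P i * P j)" unfolding qsum_Q ja by (simp add: add.commute mult.commute)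
  finally show ?thesis .
qed

lemma Q2: "(\<Sum>h\<le>min i j. cc i j h / P h) = 1 / (P i * P j)"
proof (cases "i \<le> j")
  case True then show ?thesis by (rule Q2_le)
next
  case False
  then have "(\<Sum>h\<le>min j i. cc j i h / P h) = 1 / (P j * P i)" by (intro Q2_le) simp
  then show ?thesis by (simp add: cc_sym min.commute mult.commute)
qed

lemma D2:
  assumes "i \<le> R" "j \<le> R"
  shows "(\<Sum>k\<in>{- int R..int R}. p k * (K i k * K j k)) = 1 / (P i * P j * P (i + j))"
proof -
  have "P (i + j) * (\<Sum>k\<in>{- int R..int R}. p k * (K i k * K j k))
      = (\<Sum>h\<le>min i j. cc i j h * (\<Sum>k\<in>{- int R..int R}. p k * K h k))"
    by (rule LLsum)
  also have "\<dots> = (\<Sum>h\<le>min i j. cc i j h / P h)"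
    using assms by (intro sum.cong refl) (simp add: D1)
  also have "\<dots> = 1 / (P i * P j)" by (rule Q2)
  finally have "(\<Sum>k\<in>{- int R..int R}. p k * (K i k * K j k)) = 1 / (P i * P j) / P (i + j)"
    by (rule solve_mul[OF Pnz])
  then show ?thesis by simp
qed

lemma D3:
  assumes "l \<le> R" "v \<le> R" "j \<le> R"
  shows "(\<Sum>k\<in>{- int R..int R}. p k * (K l k * K v k * K j k))
    = P (l + v + j) / (P l * P v * P j * P (l + v) * P (l + j) * P (v + j))"
proof -
  define g where "g i = q ^ ((l - i) * (v - i)) * qbin l i * qbin (v + j) (v - i)" for i
  have "P (l + v) * (\<Sum>k\<in>{- int R..int R}. p k * (K l k * K v k * K j k))
      = P (l + v) * (\<Sum>k\<in>{- int R..int R}. (p k * K j k) * (K l k * K v k))"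
    by (simp add: mult_ac)
  also have "\<dots> = (\<Sum>i\<le>min l v. cc l v i * (\<Sum>k\<in>{- int R..int R}. (p k * K j k) * K i k))"
    by (rule LLsum)
  also have "\<dots> = (\<Sum>i\<le>min l v. cc l v i * (1 / (P i * P j * P (i + j))))"
  proof (rule sum.cong[OF refl])
    fix i assume "i \<in> {..min l v}"
    then have "i \<le> R" using assms by auto
    have "(\<Sum>k\<in>{- int R..int R}. (p k * K j k) * K i k) = (\<Sum>k\<in>{- int R..int R}. p k * (K i k * K j k))"
      by (simp add: mult_ac)
    also have "\<dots> = 1 / (P i * P j * P (i + j))" using D2[OF \<open>i \<le> R\<close> assms(3)] .
    finally show "cc l v i * (\<Sum>k\<in>{- int R..int R}. (p k * K j k) * K i k) = cc l v i * (1 / (P i * P j * P (i + j)))" by simp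
  qed
  also have "\<dots> = (\<Sum>i\<le>min l v. g i / (P l * P (v + j) * P j))"
  proof (rule sum.cong[OF refl])
    fix i assume "i \<in> {..min l v}"
    then have i: "i \<le> l" "i \<le> v" by auto
    have e: "v + j - (v - i) = i + j" using i by simp
    have c1: "cc l v i = q ^ ((l - i) * (v - i)) / (P (l - i) * P (v - i))" using i by (simp add: cc_def)
    have g1: "g i = q ^ ((l - i) * (v - i)) * (P l / (P i * P (l - i))) * (P (v + j) / (P (v - i) * P (i + j)))"
      unfolding g_def qbin_def using i by (simp add: e)
    have alg: "x / (a * b) * (1 / (ii * pj * c)) = x * (pl / (ii * a)) * (pu / (b * c)) / (pl * pu * pj)"
      if "a \<noteq> 0" "b \<noteq> 0" "ii \<noteq> 0" "pj \<noteq> 0" "c \<noteq> 0" "pl \<noteq> 0" "pu \<noteq> 0" for x a b ii pj c pl pu :: complex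
      using that by (simp add: divide_simps)
    show "cc l v i * (1 / (P i * P j * P (i + j))) = g i / (P l * P (v + j) * P j)"
      unfolding c1 g1 by (rule alg) (simp_all add: Pnz)
  qed
  also have "\<dots> = (\<Sum>i\<le>v. g i) / (P l * P (v + j) * P j)"
  proof -
    have "(\<Sum>i\<le>min l v. g i) = (\<Sum>i\<le>v. g i)"
      by (rule sum_cut[where c = "min l v"]) (auto simp: g_def)
    then show ?thesis by (simp add: sum_divide_distrib[symmetric])
  qed
  also have "\<dots> = qbin (l + (v + j)) v / (P l * P (v + j) * P j)" unfolding g_def vandermonde ..
  also have "\<dots> = P (l + v + j) / (P v * P (l + j)) / (P l * P (v + j) * P j)"
  proof -
    have "l + (v + j) - v = l + j" "l + (v + j) = l + v + j" by simp_all
    then show ?thesis by (simp only: qbin_def le_add2 if_True) (simp add: mult.commute)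
  qed
  finally have "(\<Sum>k\<in>{- int R..int R}. p k * (K l k * K v k * K j k)) = P (l + v + j) / (P v * P (l + j)) / (P l * P (v + j) * P j) / P (l + v)"
    by (rule solve_mul[OF Pnz])
  then show ?thesis by (simp add: mult_ac)
qed

end

context qc begin

definition T :: "nat \<Rightarrow> nat \<Rightarrow> nat \<Rightarrow> nat \<Rightarrow> nat \<Rightarrow> complex" where
  "T l m n v k = (if k \<le> l \<and> k \<le> m \<and> k \<le> n then
     q ^ (k * k + v * k) * P (l + m + n - k) / (P k * P (l - k) * P (m - k) * P (n - k) * P (v + k)) else 0)"

definition E :: "nat \<Rightarrow> nat \<Rightarrow> nat \<Rightarrow> nat \<Rightarrow> nat \<Rightarrow> complex" where
  "E l m n v j = (if j \<le> m \<and> j \<le> n then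
     q ^ ((m - j) * (n - j)) * P (l + v + j) / (P (m - j) * P (n - j) * P j * P (l + j) * P (v + j)) else 0)"

definition H :: "nat \<Rightarrow> nat \<Rightarrow> nat \<Rightarrow> nat \<Rightarrow> nat \<Rightarrow> nat \<Rightarrow> complex" where
  "H l m n v j k = (if k \<le> j \<and> j \<le> m \<and> j \<le> n \<and> k \<le> l then
     q ^ (k * (v + k) + (m - j) * (n - j)) / (P (l + j) * P (m - j) * P (n - j) * P k * P (j - k) * P (l - k) * P (v + k)) else 0)"

lemma Hk:
  assumes "j \<le> n"
  shows "(\<Sum>k\<le>l. H l m n v j k) = E l m n v j / (P l * P (l + v))"
proof (cases "j \<le> m")
  case False
  then show ?thesis by (simp add: H_def E_def)
next
  case True
  define X where "X = q ^ ((m - j) * (n - j)) / (P (l + j) * P (m - j) * P (n - j))"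
  define F where "F k = (if k \<le> j then q ^ (k * (v + k)) / (P k * P (j - k) * P (l - k) * P (v + k)) else 0)" for k
  define g where "g i = q ^ ((l + v - i) * (l - i)) * qbin (l + v) i * qbin j (l - i)" for i
  have "(\<Sum>k\<le>l. H l m n v j k) = (\<Sum>k\<le>l. X * F k)"
  proof (rule sum.cong[OF refl])
    fix k assume "k \<in> {..l}"
    then have k: "k \<le> l" by simp
    show "H l m n v j k = X * F k"
    proof (cases "k \<le> j")
      case False then show ?thesis by (simp add: H_def F_def)
    next
      case True
      have alg: "qa * qb / (a * b * c * d * e * f * g') = qb / (a * b * c) * (qa / (d * e * f * g'))"
        for qa qb a b c d e f g' :: complex
        by (simp add: field_simps)
      show ?thesis unfolding H_def F_def X_def using True k \<open>j \<le> m\<close> assms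
        by (simp add: power_add alg)
    qed
  qed
  also have "\<dots> = X * (\<Sum>k\<le>l. F k)" by (simp add: sum_distrib_left)
  also have "(\<Sum>k\<le>l. F k) = (\<Sum>k\<le>l. g k) / (P (l + v) * P j)"
  proof -
    have "(\<Sum>k\<le>l. F k) = (\<Sum>k=0..l. F k)" by (simp add: atMost_atLeast0)
    also have "\<dots> = (\<Sum>k=0..l. F (l + 0 - k))" by (rule sum.atLeastAtMost_rev)
    also have "\<dots> = (\<Sum>k=0..l. g k / (P (l + v) * P j))"
    proof (rule sum.cong[OF refl])
      fix k assume "k \<in> {0..l}"
      then have k: "k \<le> l" by simp
      show "F (l + 0 - k) = g k / (P (l + v) * P j)"
      proof (cases "l - k \<le> j")
        case False then show ?thesis by (simp add: F_def g_def qbin_def)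
      next
        case True
        have e: "l + 0 - k = l - k" "l - (l - k) = k" "v + (l - k) = l + v - k" "(l - k) * (l + v - k) = (l + v - k) * (l - k)"
          using k by (auto simp: mult.commute)
        have alg: "x / (a * b * c * d) = x * (plv / (c * d)) * (pj / (a * b)) / (plv * pj)"
          if "a \<noteq> 0" "b \<noteq> 0" "c \<noteq> 0" "d \<noteq> 0" "plv \<noteq> 0" "pj \<noteq> 0" for x a b c d plv pj :: complex
          using that by (simp add: divide_simps)
        have f1: "F (l + 0 - k) = q ^ ((l + v - k) * (l - k)) / (P (l - k) * P (j - (l - k)) * P k * P (l + v - k))"
          unfolding F_def e(1) using True by (simp only: if_True e(2) e(3) e(4))
        have g1: "g k = q ^ ((l + v - k) * (l - k)) * (P (l + v) / (P k * P (l + v - k))) * (P j / (P (l - k) * P (j - (l - k))))"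
          unfolding g_def qbin_def using True k by simp
        show ?thesis unfolding f1 g1 by (rule alg) (simp_all add: Pnz)
      qed
    qed
    also have "\<dots> = (\<Sum>k\<le>l. g k) / (P (l + v) * P j)" by (simp add: sum_divide_distrib atMost_atLeast0)
    finally show ?thesis .
  qed
  also have "(\<Sum>k\<le>l. g k) = qbin (l + v + j) l" unfolding g_def by (rule vandermonde)
  also have "qbin (l + v + j) l = P (l + v + j) / (P l * P (v + j))"
  proof -
    have "l + v + j - l = v + j" by simp
    then show ?thesis by (simp add: qbin_def)
  qed
  also have "X * (P (l + v + j) / (P l * P (v + j)) / (P (l + v) * P j)) = E l m n v j / (P l * P (l + v))"
    unfolding X_def E_def using True assms by (simp add: field_simps)
  finally show ?thesis .
qed

lemma Hj:
  assumes "k \<le> l"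
  shows "(\<Sum>j\<le>n. H l m n v j k) = T l m n v k / (P (l + m) * P (l + n))"
proof (cases "k \<le> m \<and> k \<le> n")
  case False
  have "H l m n v j k = 0" for j using False by (auto simp: H_def)
  moreover have "T l m n v k = 0" using False by (auto simp: T_def)
  ultimately show ?thesis by simp
next
  case True
  define A where "A = m - k"
  define B where "B = l + n"
  define C where "C = n - k"
  define Y where "Y = q ^ (k * (v + k)) / (P k * P (l - k) * P (v + k))"
  define g where "g i = q ^ ((A - i) * (C - i)) * qbin A i * qbin B (C - i)" for i
  have "(\<Sum>j\<le>n. H l m n v j k) = (\<Sum>i\<le>n - k. H l m n v (k + i) k)"
    by (rule sum_shift_lower) (use True in \<open>auto simp: H_def\<close>)
  also have "\<dots> = (\<Sum>i\<le>C. Y * g i / (P A * P B))"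
  proof (rule sum.cong)
    fix i assume "i \<in> {..C}"
    then have i: "i \<le> C" by simp
    show "H l m n v (k + i) k = Y * g i / (P A * P B)"
    proof (cases "i \<le> A")
      case False
      then have "\<not> k + i \<le> m" using \<open>k \<le> m \<and> k \<le> n\<close> by (simp add: A_def)
      moreover have "qbin A i = 0" using False by simp
      ultimately show ?thesis by (simp add: H_def g_def)
    next
      case True
      have e: "m - (k + i) = A - i" "n - (k + i) = C - i" "k + i - k = i" "l + (k + i) = B - (C - i)"
        using True i \<open>k \<le> m \<and> k \<le> n\<close> by (auto simp: A_def B_def C_def)
      have h1: "H l m n v (k + i) k = q ^ (k * (v + k)) * q ^ ((A - i) * (C - i)) /
          (P (B - (C - i)) * P (A - i) * P (C - i) * P k * P i * P (l - k) * P (v + k))"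
      proof -
        have c: "k + i \<le> m" "k + i \<le> n" using True i \<open>k \<le> m \<and> k \<le> n\<close> by (auto simp: A_def C_def)
        have pw: "q ^ (k * (v + k) + (A - i) * (C - i)) = q ^ (k * (v + k)) * q ^ ((A - i) * (C - i))"
          by (rule power_add)
        show ?thesis unfolding H_def using c assms
          by (simp only: e le_add1 simp_thms if_True pw mult.assoc)
      qed
      have g1: "g i = q ^ ((A - i) * (C - i)) * (P A / (P i * P (A - i))) * (P B / (P (C - i) * P (B - (C - i))))"
        unfolding g_def qbin_def using True i by (simp add: B_def C_def)
      have alg: "x * y / (bb * a * c * pk * ii * pl * pv) = x / (pk * pl * pv) * (y * (pA / (ii * a)) * (pB / (c * bb))) / (pA * pB)"
        if "bb \<noteq> 0" "a \<noteq> 0" "c \<noteq> 0" "pk \<noteq> 0" "ii \<noteq> 0" "pl \<noteq> 0" "pv \<noteq> 0" "pA \<noteq> 0" "pB \<noteq> 0"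
        for x y bb a c pk ii pl pv pA pB :: complex
        using that by (simp add: divide_simps)
      show ?thesis unfolding h1 g1 Y_def by (rule alg) (simp_all add: Pnz)
    qed
  qed (simp add: C_def)
  also have "\<dots> = Y * (\<Sum>i\<le>C. g i) / (P A * P B)"
    by (simp add: sum_distrib_left sum_divide_distrib)
  also have "(\<Sum>i\<le>C. g i) = qbin (A + B) C" unfolding g_def by (rule vandermonde)
  also have "qbin (A + B) C = P (l + m + n - k) / (P (n - k) * P (l + m))"
  proof -
    have "C \<le> A + B" "A + B = l + m + n - k" "A + B - C = l + m" using True by (auto simp: A_def B_def C_def)
    then show ?thesis by (simp add: qbin_def C_def)
  qed
  also have "Y * (P (l + m + n - k) / (P (n - k) * P (l + m))) / (P A * P B) = T l m n v k / (P (l + m) * P (l + n))"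
  proof -
    have "k * k + v * k = k * (v + k)" by (simp add: algebra_simps)
    then show ?thesis unfolding Y_def T_def A_def B_def using True assms by (simp add: field_simps)
  qed
  finally show ?thesis .
qed

lemma Tr: "(\<Sum>k\<le>l. T l m n v k) = P (l + m) * P (l + n) / (P l * P (l + v)) * (\<Sum>j\<le>n. E l m n v j)"
proof -
  have "(\<Sum>k\<le>l. T l m n v k) = (\<Sum>k\<le>l. P (l + m) * P (l + n) * (\<Sum>j\<le>n. H l m n v j k))"
  proof (rule sum.cong[OF refl])
    fix k assume "k \<in> {..l}"
    show "T l m n v k = P (l + m) * P (l + n) * (\<Sum>j\<le>n. H l m n v j k)"
    proof -
      from \<open>k \<in> {..l}\<close> have h: "(\<Sum>j\<le>n. H l m n v j k) = T l m n v k / (P (l + m) * P (l + n))"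
        by (intro Hj) simp
      show ?thesis unfolding h using Pnz[of "l + m"] Pnz[of "l + n"] by simp
    qed
  qed
  also have "\<dots> = P (l + m) * P (l + n) * (\<Sum>j\<le>n. \<Sum>k\<le>l. H l m n v j k)"
    by (simp add: sum_distrib_left[symmetric] sum.swap[of _ "{..l}"])
  also have "\<dots> = P (l + m) * P (l + n) * (\<Sum>j\<le>n. E l m n v j / (P l * P (l + v)))"
    by (simp add: Hk)
  also have "\<dots> = P (l + m) * P (l + n) / (P l * P (l + v)) * (\<Sum>j\<le>n. E l m n v j)"
    by (simp add: sum_divide_distrib[symmetric])
  finally show ?thesis .
qed

lemma Star:
  assumes "l \<le> R" "m \<le> R" "n \<le> R" "v \<le> R"
  shows "(\<Sum>k\<le>l. T l m n v k) = P (l + m) * P (l + n) * P (m + n) * P v *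
    (\<Sum>k\<in>{- int R..int R}. p k * (K l k * K m k * K n k * K v k))"
proof -
  define L3 where "L3 j = (\<Sum>k\<in>{- int R..int R}. p k * (K l k * K v k * K j k))" for j
  have "(\<Sum>j\<le>n. E l m n v j) = (\<Sum>j\<le>n. P l * P v * P (l + v) * (cc m n j * L3 j))"
  proof (rule sum.cong[OF refl])
    fix j assume "j \<in> {..n}"
    then have j: "j \<le> n" "j \<le> R" using assms by auto
    show "E l m n v j = P l * P v * P (l + v) * (cc m n j * L3 j)"
    proof (cases "j \<le> m")
      case False then show ?thesis by (simp add: E_def cc_def)
    next
      case True
      have "L3 j = P (l + v + j) / (P l * P v * P j * P (l + v) * P (l + j) * P (v + j))"
        unfolding L3_def using D3[OF assms(1) assms(4) j(2)] .
      then show ?thesis unfolding E_def cc_def using True j Pnz by (simp add: field_simps)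
    qed
  qed
  also have "\<dots> = P l * P v * P (l + v) * (\<Sum>j\<le>min m n. cc m n j * L3 j)"
  proof -
    have "(\<Sum>j\<le>n. cc m n j * L3 j) = (\<Sum>j\<le>min m n. cc m n j * L3 j)"
      by (rule sum_cut[where c = "min m n"]) (auto simp: cc_def)
    then show ?thesis by (simp add: sum_distrib_left[symmetric])
  qed
  also have "(\<Sum>j\<le>min m n. cc m n j * L3 j)
      = P (m + n) * (\<Sum>k\<in>{- int R..int R}. (p k * K l k * K v k) * (K m k * K n k))"
    unfolding L3_def using LLsum[of m n "\<lambda>k. p k * K l k * K v k" "{- int R..int R}"]
    by (simp add: mult_ac)
  finally have "(\<Sum>j\<le>n. E l m n v j) = P l * P v * P (l + v) * (P (m + n) * (\<Sum>k\<in>{- int R..int R}. (p k * K l k * K v k) * (K m k * K n k)))" .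
  then show ?thesis unfolding Tr using Pnz[of l] Pnz[of "l + v"]
    by (simp add: field_simps mult_ac)
qed

end


lemma infsum_support:
  fixes f :: "'a \<Rightarrow> complex"
  assumes "finite A" "\<And>x. x \<notin> A \<Longrightarrow> f x = 0"
  shows "infsum f UNIV = sum f A"
proof -
  have "infsum f UNIV = infsum f A" by (rule infsum_cong_neutral) (use assms in auto)
  then show ?thesis using assms(1) by simp
qed

lemma refl_sum: "(\<Sum>k\<in>{- (R::int)..R}. f k) = (\<Sum>k\<in>{- R..R}. f (- k))"
  by (rule sum.reindex_bij_witness[where i="uminus" and j="uminus"]) auto

lemma minus_one_powi_neg: "((-1::complex) powi (- k)) = (-1) powi k"
proof -
  have "(-1::complex) powi (- k) = (-1) powi ((-1) * k)" by simp
  also have "\<dots> = ((-1) powi (-1)) powi k" by (rule power_int_mult)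
  also have "(-1::complex) powi (-1) = -1" by (simp add: power_int_minus)
  finally show ?thesis .
qed

context qc begin

lemma iP_pred: "iP (x - 1) = (1 - q powi x) * iP x"
proof (cases "x \<ge> 1")
  case True
  define n where "n = nat (x - 1)"
  have x: "x = int (Suc n)" "x - 1 = int n" using True by (simp_all add: n_def)
  have "iP (x - 1) = 1 / P n" unfolding x(2) iP_nat ..
  also have "\<dots> = (1 - q ^ Suc n) * (1 / P (Suc n))"
    using Pnz[of n] one_minus_nz[of "Suc n"] by (simp add: qpoch_Suc)
  also have "\<dots> = (1 - q powi x) * iP x" unfolding x(1) iP_nat power_int_of_nat ..
  finally show ?thesis .
next
  case False
  then show ?thesis
  proof (cases "x = 0")
    case True then show ?thesis by (simp add: qpoch_inv_def)
  next
    case False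
    then have "x < 0" using \<open>\<not> x \<ge> 1\<close> by simp
    then show ?thesis by (simp add: iP_neg)
  qed
qed

lemma p_refl: "p k * q powi k = p (- k)"
proof -
  have h: "3 * k^2 - k + k * 2 = 3 * (- k)^2 - (- k)" by (simp add: power2_eq_square)
  have h2: "(3 * k^2 - k + k * 2) div 2 = k + (3 * k^2 - k) div 2" by (rule div_mult_self1) simp
  have e: "(3 * k^2 - k) div 2 + k = (3 * (- k)^2 - (- k)) div 2"
    unfolding h[symmetric] h2 by (rule add.commute)
  have g: "q powi a * q powi b = q powi (a + b)" for a b using qnz by (simp add: power_int_add)
  have "p k * q powi k = (-1) powi k * q powi ((3 * k^2 - k) div 2 + k)"
    unfolding p_def by (simp only: mult.assoc g)
  also have "\<dots> = (-1) powi (- k) * q powi ((3 * (- k)^2 - (- k)) div 2)"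
    by (simp only: e minus_one_powi_neg)
  also have "\<dots> = p (- k)" unfolding p_def ..
  finally show ?thesis .
qed

lemma qpowi_split: "q powi (int v + k) = q ^ v * q powi k" "q powi (int v - k) = q ^ v * q powi (- k)"
proof -
  have g: "q powi (a + b) = q powi a * q powi b" for a b using qnz by (simp add: power_int_add)
  show "q powi (int v + k) = q ^ v * q powi k" unfolding g power_int_of_nat ..
  have "q powi (int v - k) = q powi (int v + (- k))" by simp
  also have "\<dots> = q ^ v * q powi (- k)" unfolding g power_int_of_nat ..
  finally show "q powi (int v - k) = q ^ v * q powi (- k)" .
qed

lemma p_neg: "p (- k) = (-1) powi k * q powi ((3 * k^2 + k) div 2)"
  by (simp add: p_def minus_one_powi_neg)

lemma K3_sym: "K l (- k) * K m (- k) * K n (- k) = K l k * K m k * K n k"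
  by (simp add: K_sym)

end

theorem corollary5p6:
  fixes q :: complex and l m n u :: nat
  assumes "0 < norm q" and "norm q < 1" and "u \<ge> 1"
  shows "(\<Sum>\<^sub>\<infinity>k::nat. q ^ (k^2 + u*k) * qpoch q (nat (int l + int m + int n - int k))
            * qpoch_inv q (int k) * qpoch_inv q (int l - int k) * qpoch_inv q (int m - int k)
            * qpoch_inv q (int n - int k) * qpoch_inv q (int u + int k))
       = (\<Sum>\<^sub>\<infinity>k::int. (-1) powi k * q powi ((3*k^2 - k) div 2)
            * qpoch q (l+m) * qpoch q (l+n) * qpoch q (m+n) * qpoch q (u-1)
            * qpoch_inv q (int l - k) * qpoch_inv q (int m - k) * qpoch_inv q (int n - k)
            * qpoch_inv q (int u - k) * qpoch_inv q (int l + k) * qpoch_inv q (int m + k)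
            * qpoch_inv q (int n + k) * qpoch_inv q (int u + k - 1))
     \<and> (\<Sum>\<^sub>\<infinity>k::nat. q ^ (k^2 + (u-1)*k) * qpoch q (nat (int l + int m + int n - int k))
            * qpoch_inv q (int k) * qpoch_inv q (int l - int k) * qpoch_inv q (int m - int k)
            * qpoch_inv q (int n - int k) * qpoch_inv q (int u + int k))
       = (\<Sum>\<^sub>\<infinity>k::int. (-1) powi k * q powi ((3*k^2 + k) div 2)
            * qpoch q (l+m) * qpoch q (m+n) * qpoch q (l+n) * qpoch q (u-1)
            * qpoch_inv q (int l - k) * qpoch_inv q (int m - k) * qpoch_inv q (int n - k)
            * qpoch_inv q (int u - k) * qpoch_inv q (int l + k) * qpoch_inv q (int m + k)
            * qpoch_inv q (int n + k) * qpoch_inv q (int u + k - 1))"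
proof -
  have qnz: "q \<noteq> 0" using assms(1) by auto
  interpret qc q by unfold_locales (use qnz qpoch_nz[OF assms(2)] in auto)
  define R where "R = l + m + n + u"
  define S where "S = {- int R..int R}"
  define C where "C = P (l + m) * P (l + n) * P (m + n)"
  define K3 where "K3 k = K l k * K m k * K n k" for k
  define W where "W v = (\<Sum>k\<in>S. p k * (K3 k * K v k))" for v
  define Y where "Y = (\<Sum>k\<in>S. q ^ u * (p k * q powi (- k) * (K3 k * K u k)))"
  define Ws where "Ws = (\<Sum>k\<in>S. q ^ u * (p k * q powi k * (K3 k * K u k)))"
  have finS: "finite S" by (simp add: S_def)
  have u1: "u = Suc (u - 1)" using assms(3) by simp
  have Pu: "P u = P (u - 1) * (1 - q ^ u)" using qpoch_Suc[of q "u - 1"] u1 by simp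
  have star: "(\<Sum>k\<le>l. T l m n v k) = C * P v * W v" if "v \<le> u" for v
  proof -
    have "(\<Sum>k\<le>l. T l m n v k) = P (l + m) * P (l + n) * P (m + n) * P v *
      (\<Sum>k\<in>{- int R..int R}. p k * (K l k * K m k * K n k * K v k))"
      by (rule Star) (use that in \<open>auto simp: R_def\<close>)
    then show ?thesis by (simp add: C_def W_def K3_def S_def)
  qed
  have Ws_eq: "Ws = q ^ u * W u"
  proof -
    have "Ws = (\<Sum>k\<in>S. q ^ u * (p (- k) * (K3 k * K u k)))"
      unfolding Ws_def by (simp add: p_refl)
    also have "\<dots> = (\<Sum>k\<in>S. q ^ u * (p (- (- k)) * (K3 (- k) * K u (- k))))"
      unfolding S_def by (rule refl_sum)
    also have "\<dots> = q ^ u * W u"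
      by (simp add: W_def K3_def K_sym sum_distrib_left)
    finally show ?thesis .
  qed
  have Wpred: "W (u - 1) = W u - Y - Ws + q ^ u * q ^ u * W u"
  proof -
    have pt: "p k * (K3 k * K (u - 1) k) = p k * (K3 k * K u k) - q ^ u * (p k * q powi (- k) * (K3 k * K u k))
        - q ^ u * (p k * q powi k * (K3 k * K u k)) + q ^ u * q ^ u * (p k * (K3 k * K u k))" for k
    proof -
      have a: "int (u - 1) - k = (int u - k) - 1" "int (u - 1) + k = (int u + k) - 1" using assms(3) by auto
      have b: "q powi (int u - k) = q ^ u * q powi (- k)" "q powi (int u + k) = q ^ u * q powi k"
        using qpowi_split by simp_all
      have c: "q powi (- k) * q powi k = 1" using qnz by (simp add: power_int_minus)
      have "K (u - 1) k = (1 - q ^ u * q powi (- k)) * (1 - q ^ u * q powi k) * K u k"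
        unfolding K_def a iP_pred b by (simp add: mult_ac)
      moreover have "pk * (Z * ((1 - Q * x) * (1 - Q * y) * KU)) = pk * (Z * KU) - Q * (pk * x * (Z * KU))
          - Q * (pk * y * (Z * KU)) + Q * Q * (pk * (Z * KU))" if "x * y = 1" for pk Z Q x y KU :: complex
      proof -
        have "(1 - Q * x) * (1 - Q * y) = 1 - Q * x - Q * y + Q * Q * (x * y)" by (simp add: algebra_simps)
        then show ?thesis using that by (simp add: algebra_simps)
      qed
      ultimately show ?thesis using c by simp
    qed
    show ?thesis unfolding W_def Y_def Ws_def pt by (simp add: sum.distrib sum_subtractf sum_distrib_left)
  qed
  have lhs1: "(\<Sum>\<^sub>\<infinity>k::nat. q ^ (k^2 + u*k) * qpoch q (nat (int l + int m + int n - int k))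
            * qpoch_inv q (int k) * qpoch_inv q (int l - int k) * qpoch_inv q (int m - int k)
            * qpoch_inv q (int n - int k) * qpoch_inv q (int u + int k)) = (\<Sum>k\<le>l. T l m n u k)"
  proof -
    have pt: "q ^ (k^2 + u*k) * qpoch q (nat (int l + int m + int n - int k))
            * qpoch_inv q (int k) * qpoch_inv q (int l - int k) * qpoch_inv q (int m - int k)
            * qpoch_inv q (int n - int k) * qpoch_inv q (int u + int k) = T l m n u k" for k
    proof (cases "k \<le> l \<and> k \<le> m \<and> k \<le> n")
      case True
      have e: "nat (int l + int m + int n - int k) = l + m + n - k" using True by simp
      have i: "iP (int k) = 1 / P k" "iP (int l - int k) = 1 / P (l - k)" "iP (int m - int k) = 1 / P (m - k)"
        "iP (int n - int k) = 1 / P (n - k)" "iP (int u + int k) = 1 / P (u + k)"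
        using True by (simp_all add: iP_nat iP_diff iP_add)
      have k2: "k^2 + u * k = k * k + u * k" by (simp add: power2_eq_square)
      show ?thesis unfolding e i T_def k2 using True by simp
    next
      case False
      then show ?thesis by (auto simp: T_def iP_diff)
    qed
    have "(\<Sum>\<^sub>\<infinity>k::nat. q ^ (k^2 + u*k) * qpoch q (nat (int l + int m + int n - int k))
            * qpoch_inv q (int k) * qpoch_inv q (int l - int k) * qpoch_inv q (int m - int k)
            * qpoch_inv q (int n - int k) * qpoch_inv q (int u + int k)) = (\<Sum>\<^sub>\<infinity>k::nat. T l m n u k)"
      by (simp only: pt)
    also have "\<dots> = (\<Sum>k\<le>l. T l m n u k)"
      by (rule infsum_support) (auto simp: T_def)
    finally show ?thesis .
  qed
  have lhs2: "(\<Sum>\<^sub>\<infinity>k::nat. q ^ (k^2 + (u-1)*k) * qpoch q (nat (int l + int m + int n - int k))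
            * qpoch_inv q (int k) * qpoch_inv q (int l - int k) * qpoch_inv q (int m - int k)
            * qpoch_inv q (int n - int k) * qpoch_inv q (int u + int k))
        = (\<Sum>k\<le>l. T l m n (u - 1) k) + q ^ u * (\<Sum>k\<le>l. T l m n u k)"
  proof -
    have pt: "q ^ (k^2 + (u-1)*k) * qpoch q (nat (int l + int m + int n - int k))
            * qpoch_inv q (int k) * qpoch_inv q (int l - int k) * qpoch_inv q (int m - int k)
            * qpoch_inv q (int n - int k) * qpoch_inv q (int u + int k) = T l m n (u - 1) k + q ^ u * T l m n u k" for k
    proof (cases "k \<le> l \<and> k \<le> m \<and> k \<le> n")
      case True
      have e: "nat (int l + int m + int n - int k) = l + m + n - k" using True by simp
      have i: "iP (int k) = 1 / P k" "iP (int l - int k) = 1 / P (l - k)" "iP (int m - int k) = 1 / P (m - k)"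
        "iP (int n - int k) = 1 / P (n - k)" "iP (int u + int k) = 1 / P (u + k)"
        using True by (simp_all add: iP_nat iP_diff iP_add)
      have k2: "k^2 + (u - 1) * k = k * k + (u - 1) * k" by (simp add: power2_eq_square)
      have pu: "P (u + k) = P (u - 1 + k) * (1 - q ^ (u + k))"
      proof -
        have e: "u + k = Suc (u - 1 + k)" using assms(3) by simp
        have "P (Suc (u - 1 + k)) = P (u - 1 + k) * (1 - q ^ Suc (u - 1 + k))" by (rule qpoch_Suc)
        then show ?thesis by (simp only: e[symmetric])
      qed
      have qq: "q ^ u * q ^ (k * k + u * k) = q ^ (k * k + (u - 1) * k) * q ^ (u + k)"
      proof -
        obtain w where w: "u = Suc w" using assms(3) by (cases u) auto
        have "u + (k * k + u * k) = k * k + (u - 1) * k + (u + k)"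
          unfolding w by (simp add: algebra_simps)
        then show ?thesis by (simp only: power_add[symmetric])
      qed
      have alg: "x * Z * (1 / a1) * (1 / a2) * (1 / a3) * (1 / a4) * (1 / (D * (1 - b)))
          = x * Z / (a1 * a2 * a3 * a4 * D) + (x * b) * Z / (a1 * a2 * a3 * a4 * (D * (1 - b)))"
        if "a1 \<noteq> 0" "a2 \<noteq> 0" "a3 \<noteq> 0" "a4 \<noteq> 0" "D \<noteq> 0" "1 - b \<noteq> 0"
        for x Z a1 a2 a3 a4 D b :: complex
        using that by (simp add: divide_simps) (simp add: algebra_simps)
      have "T l m n (u - 1) k + q ^ u * T l m n u k
          = q ^ (k * k + (u - 1) * k) * P (l + m + n - k) / (P k * P (l - k) * P (m - k) * P (n - k) * P (u - 1 + k))
          + (q ^ (k * k + (u - 1) * k) * q ^ (u + k)) * P (l + m + n - k) / (P k * P (l - k) * P (m - k) * P (n - k) * (P (u - 1 + k) * (1 - q ^ (u + k))))"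
        unfolding T_def qq[symmetric] pu[symmetric] using True by (simp add: mult.assoc)
      also have "\<dots> = q ^ (k * k + (u - 1) * k) * P (l + m + n - k) * (1 / P k) * (1 / P (l - k)) * (1 / P (m - k)) * (1 / P (n - k)) * (1 / (P (u - 1 + k) * (1 - q ^ (u + k))))"
        by (rule alg[symmetric]) (use one_minus_nz[of "u + k"] assms(3) in \<open>simp_all add: Pnz\<close>)
      finally show ?thesis unfolding e i k2 pu by simp
    next
      case False
      then show ?thesis by (auto simp: T_def iP_diff)
    qed
    have "(\<Sum>\<^sub>\<infinity>k::nat. q ^ (k^2 + (u-1)*k) * qpoch q (nat (int l + int m + int n - int k))
            * qpoch_inv q (int k) * qpoch_inv q (int l - int k) * qpoch_inv q (int m - int k)
            * qpoch_inv q (int n - int k) * qpoch_inv q (int u + int k)) = (\<Sum>\<^sub>\<infinity>k::nat. T l m n (u - 1) k + q ^ u * T l m n u k)"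
      by (simp only: pt)
    also have "\<dots> = (\<Sum>k\<le>l. T l m n (u - 1) k + q ^ u * T l m n u k)"
      by (rule infsum_support) (auto simp: T_def)
    also have "\<dots> = (\<Sum>k\<le>l. T l m n (u - 1) k) + q ^ u * (\<Sum>k\<le>l. T l m n u k)"
      by (simp add: sum.distrib sum_distrib_left)
    finally show ?thesis .
  qed
  have rhs1: "(\<Sum>\<^sub>\<infinity>k::int. (-1) powi k * q powi ((3*k^2 - k) div 2)
            * qpoch q (l+m) * qpoch q (l+n) * qpoch q (m+n) * qpoch q (u-1)
            * qpoch_inv q (int l - k) * qpoch_inv q (int m - k) * qpoch_inv q (int n - k)
            * qpoch_inv q (int u - k) * qpoch_inv q (int l + k) * qpoch_inv q (int m + k)
            * qpoch_inv q (int n + k) * qpoch_inv q (int u + k - 1)) = C * P (u - 1) * (W u - Ws)"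
  proof -
    have pt: "(-1) powi k * q powi ((3*k^2 - k) div 2)
            * qpoch q (l+m) * qpoch q (l+n) * qpoch q (m+n) * qpoch q (u-1)
            * qpoch_inv q (int l - k) * qpoch_inv q (int m - k) * qpoch_inv q (int n - k)
            * qpoch_inv q (int u - k) * qpoch_inv q (int l + k) * qpoch_inv q (int m + k)
            * qpoch_inv q (int n + k) * qpoch_inv q (int u + k - 1)
          = C * P (u - 1) * (p k * (K3 k * (iP (int u - k) * iP (int u + k - 1))))" for k
      unfolding p_def K3_def K_def C_def by (simp add: mult_ac)
    have "(\<Sum>\<^sub>\<infinity>k::int. (-1) powi k * q powi ((3*k^2 - k) div 2)
            * qpoch q (l+m) * qpoch q (l+n) * qpoch q (m+n) * qpoch q (u-1)
            * qpoch_inv q (int l - k) * qpoch_inv q (int m - k) * qpoch_inv q (int n - k)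
            * qpoch_inv q (int u - k) * qpoch_inv q (int l + k) * qpoch_inv q (int m + k)
            * qpoch_inv q (int n + k) * qpoch_inv q (int u + k - 1))
        = (\<Sum>\<^sub>\<infinity>k::int. C * P (u - 1) * (p k * (K3 k * (iP (int u - k) * iP (int u + k - 1)))))"
      by (simp only: pt)
    also have "\<dots> = (\<Sum>k\<in>S. C * P (u - 1) * (p k * (K3 k * (iP (int u - k) * iP (int u + k - 1)))))"
    proof (rule infsum_support[OF finS])
      fix k assume "k \<notin> S"
      then have "l < nat \<bar>k\<bar>" by (auto simp: S_def R_def)
      then show "C * P (u - 1) * (p k * (K3 k * (iP (int u - k) * iP (int u + k - 1)))) = 0"
        by (simp add: K3_def K_out)
    qed
    also have "\<dots> = (\<Sum>k\<in>S. C * P (u - 1) * (p k * (K3 k * K u k)) - C * P (u - 1) * (q ^ u * (p k * q powi k * (K3 k * K u k))))"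
    proof (rule sum.cong[OF refl])
      fix k
      have h: "iP (int u + k - 1) = (1 - q ^ u * q powi k) * iP (int u + k)"
        using iP_pred[of "int u + k"] qpowi_split(1)[of u k] by simp
      show "C * P (u - 1) * (p k * (K3 k * (iP (int u - k) * iP (int u + k - 1))))
          = C * P (u - 1) * (p k * (K3 k * K u k)) - C * P (u - 1) * (q ^ u * (p k * q powi k * (K3 k * K u k)))"
        unfolding K_def h by (simp add: algebra_simps)
    qed
    also have "\<dots> = C * P (u - 1) * (W u - Ws)"
      unfolding W_def Ws_def by (simp add: sum_subtractf sum_distrib_left algebra_simps)
    finally show ?thesis .
  qed
  have rhs2: "(\<Sum>\<^sub>\<infinity>k::int. (-1) powi k * q powi ((3*k^2 + k) div 2)
            * qpoch q (l+m) * qpoch q (m+n) * qpoch q (l+n) * qpoch q (u-1)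
            * qpoch_inv q (int l - k) * qpoch_inv q (int m - k) * qpoch_inv q (int n - k)
            * qpoch_inv q (int u - k) * qpoch_inv q (int l + k) * qpoch_inv q (int m + k)
            * qpoch_inv q (int n + k) * qpoch_inv q (int u + k - 1)) = C * P (u - 1) * (W u - Y)"
  proof -
    have pt: "(-1) powi k * q powi ((3*k^2 + k) div 2)
            * qpoch q (l+m) * qpoch q (m+n) * qpoch q (l+n) * qpoch q (u-1)
            * qpoch_inv q (int l - k) * qpoch_inv q (int m - k) * qpoch_inv q (int n - k)
            * qpoch_inv q (int u - k) * qpoch_inv q (int l + k) * qpoch_inv q (int m + k)
            * qpoch_inv q (int n + k) * qpoch_inv q (int u + k - 1)
          = C * P (u - 1) * (p (- k) * (K3 k * (iP (int u - k) * iP (int u + k - 1))))" for k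
      unfolding p_neg K3_def K_def C_def by (simp add: mult_ac)
    have "(\<Sum>\<^sub>\<infinity>k::int. (-1) powi k * q powi ((3*k^2 + k) div 2)
            * qpoch q (l+m) * qpoch q (m+n) * qpoch q (l+n) * qpoch q (u-1)
            * qpoch_inv q (int l - k) * qpoch_inv q (int m - k) * qpoch_inv q (int n - k)
            * qpoch_inv q (int u - k) * qpoch_inv q (int l + k) * qpoch_inv q (int m + k)
            * qpoch_inv q (int n + k) * qpoch_inv q (int u + k - 1))
        = (\<Sum>\<^sub>\<infinity>k::int. C * P (u - 1) * (p (- k) * (K3 k * (iP (int u - k) * iP (int u + k - 1)))))"
      by (simp only: pt)
    also have "\<dots> = (\<Sum>k\<in>S. C * P (u - 1) * (p (- k) * (K3 k * (iP (int u - k) * iP (int u + k - 1)))))"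
    proof (rule infsum_support[OF finS])
      fix k assume "k \<notin> S"
      then have "l < nat \<bar>k\<bar>" by (auto simp: S_def R_def)
      then show "C * P (u - 1) * (p (- k) * (K3 k * (iP (int u - k) * iP (int u + k - 1)))) = 0"
        by (simp add: K3_def K_out)
    qed
    also have "\<dots> = (\<Sum>k\<in>S. C * P (u - 1) * (p (- (- k)) * (K3 (- k) * (iP (int u - (- k)) * iP (int u + (- k) - 1)))))"
      unfolding S_def by (rule refl_sum)
    also have "\<dots> = (\<Sum>k\<in>S. C * P (u - 1) * (p k * (K3 k * K u k)) - C * P (u - 1) * (q ^ u * (p k * q powi (- k) * (K3 k * K u k))))"
    proof (rule sum.cong[OF refl])
      fix k
      have a: "int u + (- k) - 1 = (int u - k) - 1" "int u - (- k) = int u + k" by simp_all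
      have h: "iP (int u - k - 1) = (1 - q ^ u * q powi (- k)) * iP (int u - k)"
        using iP_pred[of "int u - k"] qpowi_split(2)[of u k] by simp
      have h2: "K3 (- k) = K3 k" unfolding K3_def by (rule K3_sym)
      show "C * P (u - 1) * (p (- (- k)) * (K3 (- k) * (iP (int u - (- k)) * iP (int u + (- k) - 1))))
          = C * P (u - 1) * (p k * (K3 k * K u k)) - C * P (u - 1) * (q ^ u * (p k * q powi (- k) * (K3 k * K u k)))"
        unfolding K_def a h h2 minus_minus by (simp add: algebra_simps)
    qed
    also have "\<dots> = C * P (u - 1) * (W u - Y)"
      unfolding W_def Y_def by (simp add: sum_subtractf sum_distrib_left algebra_simps)
    finally show ?thesis .
  qed
  have s1: "(\<Sum>k\<le>l. T l m n u k) = C * P (u - 1) * (W u - Ws)"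
    unfolding star[OF order_refl] Ws_eq Pu by (simp add: algebra_simps)
  have s2: "(\<Sum>k\<le>l. T l m n (u - 1) k) + q ^ u * (\<Sum>k\<le>l. T l m n u k) = C * P (u - 1) * (W u - Y)"
  proof -
    have a: "(\<Sum>k\<le>l. T l m n (u - 1) k) = C * P (u - 1) * W (u - 1)" by (rule star) simp
    have b: "(\<Sum>k\<le>l. T l m n u k) = C * P u * W u" by (rule star) simp
    show ?thesis unfolding a b Wpred Ws_eq Pu by (simp add: algebra_simps)
  qed
  show ?thesis
    apply (rule conjI)
     apply (simp only: lhs1 rhs1 s1)
    apply (simp only: lhs2 rhs2 s2)
    done
qed


end
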